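(* Let $G$ be a finite group and $p$ the smallest prime divisor of $|G|$. If $G'\not\subseteq Z(G)$ and $|G/C_G(G')|=|G'\cap Z(G)|=p$, then $Z(G)^*\subsetneq C_G(G')$ and $C_G(G')/Z(G)^*$ can be embedded in $G'/(G'\cap Z(G))$.
   Context: $G'$ is the commutator subgroup, $Z(G)$ the center, $C_G(G')$ the centralizer of $G'$ in $G$. Commutators are $[x,y]=xyx^{-1}y^{-1}$; for $x\in G$, $[G,x]=\{[y,x]: y\in G\}$; for a subset $H\subseteq G$, $H^*=\{x\in G : [G,x]\subseteq H\}$. Thus $Z(G)^*=\{x\in G: [G,x]\subseteq Z(G)\}$. *)

theory Defs
  imports "HOL-Algebra.Algebra" "HOL-Computational_Algebra.Primes"
begin

text \<open>Commutator [x,y] = x y x^-1 y^-1 (same convention as HOL-Algebra's derived_set).\<close>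
definition gcomm :: "('a, 'b) monoid_scheme \<Rightarrow> 'a \<Rightarrow> 'a \<Rightarrow> 'a" where
  "gcomm G x y = x \<otimes>\<^bsub>G\<^esub> y \<otimes>\<^bsub>G\<^esub> inv\<^bsub>G\<^esub> x \<otimes>\<^bsub>G\<^esub> inv\<^bsub>G\<^esub> y"

definition gcenter :: "('a, 'b) monoid_scheme \<Rightarrow> 'a set" where
  "gcenter G = {z \<in> carrier G. \<forall>x \<in> carrier G. z \<otimes>\<^bsub>G\<^esub> x = x \<otimes>\<^bsub>G\<^esub> z}"

definition gcentralizer :: "('a, 'b) monoid_scheme \<Rightarrow> 'a set \<Rightarrow> 'a set" where
  "gcentralizer G H = {x \<in> carrier G. \<forall>h \<in> H. x \<otimes>\<^bsub>G\<^esub> h = h \<otimes>\<^bsub>G\<^esub> x}"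

definition gstar :: "('a, 'b) monoid_scheme \<Rightarrow> 'a set \<Rightarrow> 'a set" where
  "gstar G H = {x \<in> carrier G. \<forall>y \<in> carrier G. gcomm G y x \<in> H}"

end

theory Submission
  imports Defs
begin

context group begin

lemma lcanc1 [simp]: "x \<in> carrier G \<Longrightarrow> y \<in> carrier G \<Longrightarrow> inv x \<otimes> (x \<otimes> y) = y"
  by (simp add: m_assoc[symmetric])
lemma lcanc2 [simp]: "x \<in> carrier G \<Longrightarrow> y \<in> carrier G \<Longrightarrow> x \<otimes> (inv x \<otimes> y) = y"
  by (simp add: m_assoc[symmetric])

lemma gcomm_closed [simp]: "x \<in> carrier G \<Longrightarrow> y \<in> carrier G \<Longrightarrow> gcomm G x y \<in> carrier G"
  by (simp add: gcomm_def)

lemma gcomm_inv: "x \<in> carrier G \<Longrightarrow> y \<in> carrier G \<Longrightarrow> inv (gcomm G x y) = gcomm G y x"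
  by (simp add: gcomm_def inv_mult_group m_assoc)

lemma gcomm_mult_left: "x \<in> carrier G \<Longrightarrow> y \<in> carrier G \<Longrightarrow> z \<in> carrier G \<Longrightarrow>
  gcomm G (y \<otimes> z) x = y \<otimes> gcomm G z x \<otimes> inv y \<otimes> gcomm G y x"
  by (simp add: gcomm_def inv_mult_group m_assoc)

lemma gcomm_inv_left: "x \<in> carrier G \<Longrightarrow> y \<in> carrier G \<Longrightarrow>
  gcomm G (inv y) x = inv y \<otimes> inv (gcomm G y x) \<otimes> y"
  by (simp add: gcomm_def inv_mult_group m_assoc)

lemma gcomm_mult_right: "x \<in> carrier G \<Longrightarrow> y \<in> carrier G \<Longrightarrow> x' \<in> carrier G \<Longrightarrow>
  gcomm G y (x \<otimes> x') = gcomm G y x \<otimes> x \<otimes> gcomm G y x' \<otimes> inv x"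
  by (simp add: gcomm_def inv_mult_group m_assoc)

lemma gcomm_inv_right: "x \<in> carrier G \<Longrightarrow> y \<in> carrier G \<Longrightarrow>
  gcomm G y (inv x) = inv x \<otimes> inv (gcomm G y x) \<otimes> x"
  by (simp add: gcomm_def inv_mult_group m_assoc)

end

context group begin

lemma gcomm_one_iff: "a \<in> carrier G \<Longrightarrow> b \<in> carrier G \<Longrightarrow> gcomm G a b = \<one> \<longleftrightarrow> a \<otimes> b = b \<otimes> a"
proof -
  assume a: "a \<in> carrier G" and b: "b \<in> carrier G"
  have "gcomm G a b = (a \<otimes> b) \<otimes> inv (b \<otimes> a)"
    using a b by (simp add: gcomm_def inv_mult_group m_assoc)
  also have "\<dots> = \<one> \<longleftrightarrow> a \<otimes> b = b \<otimes> a"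
  proof
    assume h: "(a \<otimes> b) \<otimes> inv (b \<otimes> a) = \<one>"
    have "inv (inv (b \<otimes> a)) = a \<otimes> b" using inv_equality[OF h] a b by simp
    then show "a \<otimes> b = b \<otimes> a" using a b by simp
  next
    assume "a \<otimes> b = b \<otimes> a"
    then show "(a \<otimes> b) \<otimes> inv (b \<otimes> a) = \<one>" using a b by simp
  qed
  finally show ?thesis .
qed

lemma comm_inv_closed: "a \<in> carrier G \<Longrightarrow> x \<in> carrier G \<Longrightarrow> a \<otimes> x = x \<otimes> a \<Longrightarrow> inv a \<otimes> x = x \<otimes> inv a"
proof -
  assume a: "a \<in> carrier G" and x: "x \<in> carrier G" and c: "a \<otimes> x = x \<otimes> a"
  have "x \<otimes> inv a = inv a \<otimes> (a \<otimes> x) \<otimes> inv a" using a x by (simp add: m_assoc)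
  also have "\<dots> = inv a \<otimes> (x \<otimes> a) \<otimes> inv a" using c by simp
  also have "\<dots> = inv a \<otimes> x" using a x by (simp add: m_assoc)
  finally show ?thesis by simp
qed

lemma comm_mult_closed: "a \<in> carrier G \<Longrightarrow> b \<in> carrier G \<Longrightarrow> x \<in> carrier G \<Longrightarrow> a \<otimes> x = x \<otimes> a \<Longrightarrow> b \<otimes> x = x \<otimes> b \<Longrightarrow> (a \<otimes> b) \<otimes> x = x \<otimes> (a \<otimes> b)"
proof -
  assume a: "a \<in> carrier G" and b: "b \<in> carrier G" and x: "x \<in> carrier G" and c: "a \<otimes> x = x \<otimes> a" and d: "b \<otimes> x = x \<otimes> b"
  have "(a \<otimes> b) \<otimes> x = a \<otimes> (b \<otimes> x)" using a b x by (simp add: m_assoc)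
  also have "\<dots> = (a \<otimes> x) \<otimes> b" using a b x d by (simp add: m_assoc)
  also have "\<dots> = x \<otimes> (a \<otimes> b)" using a b x c by (simp add: m_assoc)
  finally show ?thesis .
qed

lemma center_subgroup: "subgroup (gcenter G) G"
proof (rule subgroupI)
  show "gcenter G \<subseteq> carrier G" unfolding gcenter_def by blast
  have "\<one> \<in> gcenter G" unfolding gcenter_def by simp
  then show "gcenter G \<noteq> {}" by blast
next
  fix a assume a: "a \<in> gcenter G"
  have ac: "a \<in> carrier G" and ae: "\<And>h. h \<in> carrier G \<Longrightarrow> a \<otimes> h = h \<otimes> a"
    using a unfolding gcenter_def by auto
  have "inv a \<otimes> h = h \<otimes> inv a" if "h \<in> carrier G" for h
    using comm_inv_closed[OF ac that ae[OF that]] .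
  then show "inv a \<in> gcenter G" using ac unfolding gcenter_def by simp
next
  fix a b assume a: "a \<in> gcenter G" and b: "b \<in> gcenter G"
  have ac: "a \<in> carrier G" and ae: "\<And>h. h \<in> carrier G \<Longrightarrow> a \<otimes> h = h \<otimes> a"
    using a unfolding gcenter_def by auto
  have bc: "b \<in> carrier G" and be: "\<And>h. h \<in> carrier G \<Longrightarrow> b \<otimes> h = h \<otimes> b"
    using b unfolding gcenter_def by auto
  have "a \<otimes> b \<otimes> h = h \<otimes> (a \<otimes> b)" if "h \<in> carrier G" for h
    using comm_mult_closed[OF ac bc that ae[OF that] be[OF that]] .
  then show "a \<otimes> b \<in> gcenter G" using ac bc unfolding gcenter_def by simp
qed

lemma centralizer_subgroup:
  assumes H: "H \<subseteq> carrier G" shows "subgroup (gcentralizer G H) G"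
proof (rule subgroupI)
  show "gcentralizer G H \<subseteq> carrier G" by (auto simp: gcentralizer_def)
  show "gcentralizer G H \<noteq> {}" using H by (auto simp: gcentralizer_def intro!: exI[of _ \<one>])
next
  fix a assume a: "a \<in> gcentralizer G H"
  show "inv a \<in> gcentralizer G H"
    unfolding gcentralizer_def
  proof (intro CollectI conjI ballI)
    show "inv a \<in> carrier G" using a by (auto simp: gcentralizer_def)
    fix h assume "h \<in> H"
    then show "inv a \<otimes> h = h \<otimes> inv a"
      using comm_inv_closed[of a h] H a unfolding gcentralizer_def by blast
  qed
next
  fix a b assume a: "a \<in> gcentralizer G H" and b: "b \<in> gcentralizer G H"
  show "a \<otimes> b \<in> gcentralizer G H"
    unfolding gcentralizer_def
  proof (intro CollectI conjI ballI)
    show "a \<otimes> b \<in> carrier G" using a b by (auto simp: gcentralizer_def)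
    fix h assume "h \<in> H"
    then show "a \<otimes> b \<otimes> h = h \<otimes> (a \<otimes> b)"
      using comm_mult_closed[of a b h] H a b unfolding gcentralizer_def by blast
  qed
qed

lemma central_conj: "z \<in> gcenter G \<Longrightarrow> y \<in> carrier G \<Longrightarrow> y \<otimes> z \<otimes> inv y = z"
proof -
  assume z: "z \<in> gcenter G" and y: "y \<in> carrier G"
  have zc: "z \<in> carrier G" and e: "z \<otimes> y = y \<otimes> z" using z y by (auto simp: gcenter_def)
  have "y \<otimes> z \<otimes> inv y = z \<otimes> y \<otimes> inv y" using e by simp
  also have "\<dots> = z" using zc y by (simp add: m_assoc)
  finally show ?thesis .
qed

lemma central_comm: "z \<in> gcenter G \<Longrightarrow> y \<in> carrier G \<Longrightarrow> z \<otimes> y = y \<otimes> z"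
  by (auto simp: gcenter_def)

lemma gcomm_in_derived: "x \<in> carrier G \<Longrightarrow> y \<in> carrier G \<Longrightarrow> gcomm G x y \<in> derived G (carrier G)"
  unfolding derived_def gcomm_def by (rule generate.incl) blast

lemma derived_sub_iff: "(\<And>x y. x \<in> carrier G \<Longrightarrow> y \<in> carrier G \<Longrightarrow> gcomm G x y \<in> K) \<Longrightarrow> subgroup K G
   \<Longrightarrow> derived G (carrier G) \<subseteq> K"
  unfolding derived_def by (rule generate_subgroup_incl) (auto simp: gcomm_def)

lemma conj_comm: "a \<in> carrier G \<Longrightarrow> b \<in> carrier G \<Longrightarrow> z \<in> carrier G \<Longrightarrow> a \<otimes> b = b \<otimes> a \<Longrightarrow>
  (z \<otimes> a \<otimes> inv z) \<otimes> (z \<otimes> b \<otimes> inv z) = (z \<otimes> b \<otimes> inv z) \<otimes> (z \<otimes> a \<otimes> inv z)"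
proof -
  assume a: "a \<in> carrier G" and b: "b \<in> carrier G" and z: "z \<in> carrier G" and e: "a \<otimes> b = b \<otimes> a"
  have "(z \<otimes> a \<otimes> inv z) \<otimes> (z \<otimes> b \<otimes> inv z) = z \<otimes> (a \<otimes> b) \<otimes> inv z"
    using a b z by (simp add: m_assoc)
  also have "\<dots> = z \<otimes> (b \<otimes> a) \<otimes> inv z" using e by simp
  also have "\<dots> = (z \<otimes> b \<otimes> inv z) \<otimes> (z \<otimes> a \<otimes> inv z)"
    using a b z by (simp add: m_assoc)
  finally show ?thesis .
qed

lemma conj_gcomm: "a \<in> carrier G \<Longrightarrow> b \<in> carrier G \<Longrightarrow> z \<in> carrier G \<Longrightarrow>
  z \<otimes> gcomm G a b \<otimes> inv z = gcomm G (z \<otimes> a \<otimes> inv z) (z \<otimes> b \<otimes> inv z)"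
  by (simp add: gcomm_def inv_mult_group m_assoc)

end

lemma (in group) main_aux:
  fixes p :: nat
  assumes "finite (carrier G)"
    and "Factorial_Ring.prime p" and "p dvd order G"
    and "\<forall>q. Factorial_Ring.prime q \<and> q dvd order G \<longrightarrow> p \<le> q"
    and "\<not> (derived G (carrier G) \<subseteq> gcenter G)"
    and "card (rcosets\<^bsub>G\<^esub> (gcentralizer G (derived G (carrier G)))) = p"
    and "card (derived G (carrier G) \<inter> gcenter G) = p"
  shows "gstar G (gcenter G) \<subset> gcentralizer G (derived G (carrier G))
    \<and> gstar G (gcenter G) \<lhd> (G\<lparr>carrier := gcentralizer G (derived G (carrier G))\<rparr>)
    \<and> (derived G (carrier G) \<inter> gcenter G) \<lhd> (G\<lparr>carrier := derived G (carrier G)\<rparr>)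
    \<and> (\<exists>h. h \<in> hom ((G\<lparr>carrier := gcentralizer G (derived G (carrier G))\<rparr>) Mod gstar G (gcenter G))
                    ((G\<lparr>carrier := derived G (carrier G)\<rparr>) Mod (derived G (carrier G) \<inter> gcenter G))
           \<and> inj_on h (carrier ((G\<lparr>carrier := gcentralizer G (derived G (carrier G))\<rparr>) Mod gstar G (gcenter G))))"
proof -
  define D where "D = derived G (carrier G)"
  define Z where "Z = gcenter G"
  define C where "C = gcentralizer G D"
  define S where "S = gstar G Z"
  have Dsub: "subgroup D G" unfolding D_def by (rule derived_is_subgroup) simp
  have Dc: "D \<subseteq> carrier G" using Dsub subgroup.subset by blast
  have Zsub: "subgroup Z G" unfolding Z_def by (rule center_subgroup)
  have Csub: "subgroup C G" unfolding C_def by (rule centralizer_subgroup[OF Dc])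
  have Cc: "C \<subseteq> carrier G" using Csub subgroup.subset by blast
  have prime: "Factorial_Ring.prime p" using assms(2) by simp
  have idx: "card (rcosets C) = p" using assms(6) by (simp add: C_def D_def)
  have fin: "finite (carrier G)" by (rule assms(1))
  have lag: "card (rcosets C) * card C = order G" by (rule lagrange[OF Csub])
  have ordpos: "order G > 0" using fin by (simp add: order_gt_0_iff_finite)
  have p1: "p > 1" using prime prime_gt_1_nat by blast
  have Cne: "C \<noteq> carrier G"
  proof
    assume "C = carrier G"
    then have "card C = order G" by (simp add: order_def)
    then have "card (rcosets C) = 1" using lag ordpos by simp
    with idx p1 show False by simp
  qed
  obtain g where g: "g \<in> carrier G" "g \<notin> C" using Cne Cc by blast
  have key: "H = carrier G" if H: "subgroup H G" "C \<subseteq> H" "g \<in> H" for H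
  proof -
    have lH: "card (rcosets H) * card H = order G" by (rule lagrange[OF H(1)])
    interpret HG: group "G\<lparr>carrier := H\<rparr>" by (rule subgroup_imp_group[OF H(1)])
    have CH: "subgroup C (G\<lparr>carrier := H\<rparr>)" by (rule subgroup_incl[OF Csub H(1) H(2)])
    have lC: "card (rcosets\<^bsub>G\<lparr>carrier := H\<rparr>\<^esub> C) * card C = card H"
      using HG.lagrange[OF CH] by (simp add: order_def)
    have Hc: "H \<subseteq> carrier G" using H(1) subgroup.subset by blast
    have finH: "finite H" using Hc fin finite_subset by blast
    have lt: "card C < card H" using g H(2,3) finH by (intro psubset_card_mono) auto
    have finC: "finite C" using Cc fin finite_subset by blast
    have Cpos: "card C > 0" using finC subgroup.one_closed[OF Csub] by (auto simp: card_gt_0_iff)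
    define k where "k = card (rcosets\<^bsub>G\<lparr>carrier := H\<rparr>\<^esub> C)"
    define m where "m = card (rcosets H)"
    have e1: "p * card C = order G" using lag idx by simp
    have e2: "order G = m * (k * card C)" using lH lC by (simp add: m_def k_def)
    have "p * card C = (m * k) * card C" using e1 e2 by (simp add: mult.assoc)
    then have pmk: "p = m * k" using Cpos by simp
    have "k \<noteq> 1" using lC lt unfolding k_def by auto
    moreover have "k dvd p" using pmk by simp
    ultimately have "k = p" using prime unfolding prime_nat_iff by blast
    then have "p = m * p" using pmk by simp
    then have "m = 1" using p1 by simp
    then have "card H = card (carrier G)" using lH by (simp add: m_def order_def)
    then show ?thesis by (rule card_subset_eq[OF fin Hc])
  qed
  have Zc: "Z \<subseteq> carrier G" using Zsub subgroup.subset by blast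
  note Zm = subgroup.m_closed[OF Zsub] and Zi = subgroup.m_inv_closed[OF Zsub]
    and Z1 = subgroup.one_closed[OF Zsub]
  have Zconj: "y \<otimes> w \<otimes> inv y = w" if "w \<in> Z" "y \<in> carrier G" for w y
    using central_conj that Z_def by blast
  have Zcomm: "w \<otimes> y = y \<otimes> w" if "w \<in> Z" "y \<in> carrier G" for w y
    using central_comm that Z_def by blast
  have Sdef: "x \<in> S \<longleftrightarrow> x \<in> carrier G \<and> (\<forall>y\<in>carrier G. gcomm G y x \<in> Z)" for x
    by (simp add: S_def gstar_def)
  have Cdef: "x \<in> C \<longleftrightarrow> x \<in> carrier G \<and> (\<forall>h\<in>D. x \<otimes> h = h \<otimes> x)" for x
    by (simp add: C_def gcentralizer_def)
  have gD: "gcomm G a b \<in> D" if "a \<in> carrier G" "b \<in> carrier G" for a b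
    using gcomm_in_derived that D_def by blast
  have CD: "x \<otimes> h = h \<otimes> x" if "x \<in> C" "h \<in> D" for x h using that Cdef by blast

  have A: "x \<in> S" if x: "x \<in> carrier G" and xC: "\<forall>c\<in>C. gcomm G c x \<in> Z" and xg: "gcomm G g x \<in> Z" for x
  proof -
    define T where "T = {y \<in> carrier G. gcomm G y x \<in> Z}"
    have "subgroup T G"
    proof (rule subgroupI)
      show "T \<subseteq> carrier G" by (auto simp: T_def)
      show "T \<noteq> {}" using x Z1 by (auto simp: T_def gcomm_def intro!: exI[of _ \<one>])
    next
      fix y assume y: "y \<in> T"
      then have yc: "y \<in> carrier G" and w: "gcomm G y x \<in> Z" by (auto simp: T_def)
      have "gcomm G (inv y) x = inv y \<otimes> inv (gcomm G y x) \<otimes> inv (inv y)"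
        using gcomm_inv_left[OF x yc] yc by simp
      also have "\<dots> = inv (gcomm G y x)" using Zconj[OF Zi[OF w], of "inv y"] yc by simp
      finally show "inv y \<in> T" using Zi[OF w] yc by (simp add: T_def)
    next
      fix y z assume y: "y \<in> T" and z: "z \<in> T"
      then have yc: "y \<in> carrier G" and w: "gcomm G y x \<in> Z" 
        and zc: "z \<in> carrier G" and w': "gcomm G z x \<in> Z" by (auto simp: T_def)
      have "gcomm G (y \<otimes> z) x = y \<otimes> gcomm G z x \<otimes> inv y \<otimes> gcomm G y x"
        using gcomm_mult_left[OF x yc zc] .
      also have "\<dots> = gcomm G z x \<otimes> gcomm G y x" using Zconj[OF w' yc] by simp
      finally show "y \<otimes> z \<in> T" using Zm[OF w' w] yc zc by (simp add: T_def)
    qed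
    moreover have "C \<subseteq> T" using xC Cc by (auto simp: T_def)
    moreover have "g \<in> T" using xg g by (simp add: T_def)
    ultimately have "T = carrier G" using key by blast
    then show ?thesis using x by (auto simp: Sdef T_def)
  qed

  have Ssub: "subgroup S G"
  proof (rule subgroupI)
    show "S \<subseteq> carrier G" by (auto simp: Sdef)
    have "\<one> \<in> S" using Z1 by (simp add: Sdef gcomm_def)
    then show "S \<noteq> {}" by blast
  next
    fix x assume "x \<in> S"
    then have x: "x \<in> carrier G" and w: "\<forall>y\<in>carrier G. gcomm G y x \<in> Z" by (auto simp: Sdef)
    have "gcomm G y (inv x) \<in> Z" if y: "y \<in> carrier G" for y
    proof -
      have "gcomm G y (inv x) = inv x \<otimes> inv (gcomm G y x) \<otimes> inv (inv x)"
        using gcomm_inv_right[OF x y] x by simp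
      also have "\<dots> = inv (gcomm G y x)" using Zconj[OF Zi[OF w[rule_format, OF y]], of "inv x"] x by simp
      finally show ?thesis using Zi[OF w[rule_format, OF y]] by simp
    qed
    then show "inv x \<in> S" using x by (simp add: Sdef)
  next
    fix x x' assume "x \<in> S" "x' \<in> S"
    then have x: "x \<in> carrier G" and w: "\<forall>y\<in>carrier G. gcomm G y x \<in> Z"
      and x': "x' \<in> carrier G" and w': "\<forall>y\<in>carrier G. gcomm G y x' \<in> Z" by (auto simp: Sdef)
    have "gcomm G y (x \<otimes> x') \<in> Z" if y: "y \<in> carrier G" for y
    proof -
      have "gcomm G y (x \<otimes> x') = gcomm G y x \<otimes> x \<otimes> gcomm G y x' \<otimes> inv x"
        using gcomm_mult_right[OF x y x'] .
      also have "\<dots> = gcomm G y x \<otimes> (x \<otimes> gcomm G y x' \<otimes> inv x)" using x y x' by (simp add: m_assoc)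
      also have "\<dots> = gcomm G y x \<otimes> gcomm G y x'" using Zconj[OF w'[rule_format, OF y] x] by simp
      finally show ?thesis using Zm w w' y by simp
    qed
    then show "x \<otimes> x' \<in> S" using x x' by (simp add: Sdef)
  qed

  have SC: "S \<subseteq> C"
  proof
    fix x assume "x \<in> S"
    then have x: "x \<in> carrier G" and w: "\<And>y. y \<in> carrier G \<Longrightarrow> gcomm G y x \<in> Z" by (auto simp: Sdef)
    define f where "f y = gcomm G y x" for y
    have fc: "f y \<in> carrier G" if "y \<in> carrier G" for y using that x by (simp add: f_def)
    have fZ: "f y \<in> Z" if "y \<in> carrier G" for y using that w by (simp add: f_def)
    have fm: "f (y \<otimes> z) = f z \<otimes> f y" if "y \<in> carrier G" "z \<in> carrier G" for y z
      using gcomm_mult_left[OF x that] Zconj[OF fZ[OF that(2)] that(1)] by (simp add: f_def)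
    have fi: "f (inv y) = inv (f y)" if y: "y \<in> carrier G" for y
      using gcomm_inv_left[OF x y] Zconj[OF Zi[OF fZ[OF y]], of "inv y"] y by (simp add: f_def)
    define T where "T = {y \<in> carrier G. gcomm G y x = \<one>}"
    have Tsub: "subgroup T G"
    proof (rule subgroupI)
      show "T \<subseteq> carrier G" by (auto simp: T_def)
      show "T \<noteq> {}" using x by (auto simp: T_def gcomm_def intro!: exI[of _ \<one>])
    next
      fix y assume "y \<in> T"
      then have y: "y \<in> carrier G" and e: "gcomm G y x = \<one>" by (auto simp: T_def)
      show "inv y \<in> T" using gcomm_inv_left[OF x y] e y by (simp add: T_def)
    next
      fix y z assume "y \<in> T" "z \<in> T"
      then have y: "y \<in> carrier G" and e: "gcomm G y x = \<one>" and z: "z \<in> carrier G" and e': "gcomm G z x = \<one>"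
        by (auto simp: T_def)
      show "y \<otimes> z \<in> T" using gcomm_mult_left[OF x y z] e e' y z by (simp add: T_def)
    qed
    have "gcomm G (gcomm G a b) x = \<one>" if a: "a \<in> carrier G" and b: "b \<in> carrier G" for a b
    proof -
      have "gcomm G (gcomm G a b) x = f (a \<otimes> b \<otimes> inv a \<otimes> inv b)" by (simp add: f_def gcomm_def)
      also have "\<dots> = f (inv b) \<otimes> (f (inv a) \<otimes> (f b \<otimes> f a))" using a b by (simp add: fm)
      also have "\<dots> = inv (f b) \<otimes> (inv (f a) \<otimes> (f b \<otimes> f a))" using a b by (simp add: fi)
      also have "\<dots> = inv (f b) \<otimes> ((inv (f a) \<otimes> f b) \<otimes> f a)" using a b fc by (simp add: m_assoc)
      also have "\<dots> = inv (f b) \<otimes> ((f b \<otimes> inv (f a)) \<otimes> f a)"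
        using Zcomm[OF Zi[OF fZ[OF a]] fc[OF b]] by simp
      also have "\<dots> = \<one>" using a b fc by (simp add: m_assoc)
      finally show ?thesis .
    qed
    then have "D \<subseteq> T" unfolding D_def using Tsub by (intro derived_sub_iff) (auto simp: T_def)
    have "\<forall>h\<in>D. x \<otimes> h = h \<otimes> x"
    proof
      fix h assume h: "h \<in> D"
      then have hc: "h \<in> carrier G" and e: "gcomm G h x = \<one>" using \<open>D \<subseteq> T\<close> by (auto simp: T_def)
      show "x \<otimes> h = h \<otimes> x" using gcomm_one_iff[OF hc x] e by simp
    qed
    then show "x \<in> C" using x by (simp add: Cdef)
  qed

  have CC: "gcomm G c x \<in> Z" if c: "c \<in> C" and xC: "x \<in> C" for c x
  proof -
    have cc: "c \<in> carrier G" and xc: "x \<in> carrier G" using c xC Cc by auto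
    define w where "w = gcomm G c x"
    have wC: "w \<in> C" unfolding w_def gcomm_def
      by (intro subgroup.m_closed[OF Csub] subgroup.m_inv_closed[OF Csub] c xC)
    have wc: "w \<in> carrier G" using wC Cc by auto
    have "z \<otimes> w \<otimes> inv z = w" if z: "z \<in> carrier G" for z
    proof -
      define u where "u = gcomm G z c"
      define v where "v = gcomm G z x"
      have uD: "u \<in> D" and vD: "v \<in> D" using gD z cc xc by (auto simp: u_def v_def)
      have uc: "u \<in> carrier G" and vc: "v \<in> carrier G" using uD vD Dc by auto
      have e1: "z \<otimes> c \<otimes> inv z = u \<otimes> c" using z cc by (simp add: u_def gcomm_def m_assoc)
      have e2: "z \<otimes> x \<otimes> inv z = v \<otimes> x" using z xc by (simp add: v_def gcomm_def m_assoc)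
      have ux: "gcomm G u x = \<one>" using CD[OF xC uD] gcomm_one_iff uc xc by simp
      have cv: "gcomm G c v = \<one>" using CD[OF c vD] gcomm_one_iff vc cc by simp
      define bb where "bb = gcomm G x (inv z)"
      have bD: "bb \<in> D" using gD xc z by (simp add: bb_def)
      have bc: "bb \<in> carrier G" using bD Dc by auto
      have ev: "v = z \<otimes> bb \<otimes> inv z" using z xc by (simp add: v_def bb_def gcomm_def m_assoc)
      have Av: "(z \<otimes> c \<otimes> inv z) \<otimes> v = v \<otimes> (z \<otimes> c \<otimes> inv z)"
        using conj_comm[OF cc bc z CD[OF c bD]] ev by simp
      have icv: "inv c \<otimes> v = v \<otimes> inv c"
        using CD[OF subgroup.m_inv_closed[OF Csub c] vD] by simp
      have eu: "u = (z \<otimes> c \<otimes> inv z) \<otimes> inv c" by (simp add: u_def gcomm_def)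
      have "u \<otimes> v = (z \<otimes> c \<otimes> inv z) \<otimes> (inv c \<otimes> v)" using eu z cc vc by (simp add: m_assoc)
      also have "\<dots> = ((z \<otimes> c \<otimes> inv z) \<otimes> v) \<otimes> inv c" using icv z cc vc by (simp add: m_assoc)
      also have "\<dots> = v \<otimes> u" using Av eu z cc vc by (simp add: m_assoc)
      finally have uv: "gcomm G u v = \<one>" using gcomm_one_iff uc vc by simp
      have "v \<otimes> w \<otimes> inv v = w \<otimes> v \<otimes> inv v" using CD[OF wC vD] by simp
      also have "\<dots> = w" using vc wc by (simp add: m_assoc)
      finally have wv: "v \<otimes> w \<otimes> inv v = w" .
      have "u \<otimes> w \<otimes> inv u = w \<otimes> u \<otimes> inv u" using CD[OF wC uD] by simp
      also have "\<dots> = w" using uc wc by (simp add: m_assoc)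
      finally have wu: "u \<otimes> w \<otimes> inv u = w" .
      have "z \<otimes> w \<otimes> inv z = gcomm G (u \<otimes> c) (v \<otimes> x)"
        using conj_gcomm[OF cc xc z] e1 e2 by (simp add: w_def)
      also have "\<dots> = u \<otimes> gcomm G c (v \<otimes> x) \<otimes> inv u \<otimes> gcomm G u (v \<otimes> x)"
        using gcomm_mult_left[of "v \<otimes> x" u c] uc vc cc xc by simp
      also have "gcomm G u (v \<otimes> x) = gcomm G u v \<otimes> v \<otimes> gcomm G u x \<otimes> inv v"
        using gcomm_mult_right[OF vc uc xc] .
      also have "\<dots> = \<one>" using uv ux vc by simp
      also have "gcomm G c (v \<otimes> x) = gcomm G c v \<otimes> v \<otimes> gcomm G c x \<otimes> inv v"
        using gcomm_mult_right[OF vc cc xc] .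
      also have "\<dots> = w" using cv wv vc wc by (simp add: w_def)
      finally show ?thesis using wu uc wc by simp
    qed
    note conjz = this
    have "\<forall>z\<in>carrier G. w \<otimes> z = z \<otimes> w"
    proof
      fix z assume z: "z \<in> carrier G"
      have "z \<otimes> w = (z \<otimes> w \<otimes> inv z) \<otimes> z" using z wc by (simp add: m_assoc)
      also have "\<dots> = w \<otimes> z" using conjz[OF z] by simp
      finally show "w \<otimes> z = z \<otimes> w" by simp
    qed
    then show ?thesis using wc by (simp add: w_def[symmetric] Z_def gcenter_def)
  qed
  have SneC: "S \<noteq> C"
  proof
    assume SC': "S = C"
    have "g \<in> S"
    proof (rule A[OF g(1)])
      show "\<forall>c\<in>C. gcomm G c g \<in> Z"
      proof
        fix c assume c: "c \<in> C"
        then have cc: "c \<in> carrier G" using Cc by auto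
        have "c \<in> S" using c SC' by simp
        then have "gcomm G g c \<in> Z" using g(1) by (simp add: Sdef)
        then have "inv (gcomm G g c) \<in> Z" by (rule Zi)
        then show "gcomm G c g \<in> Z" using gcomm_inv[OF g(1) cc] by simp
      qed
      show "gcomm G g g \<in> Z" using g(1) Z1 by (simp add: gcomm_def m_assoc)
    qed
    then have Sall: "S = carrier G" using key[OF Ssub] SC' by auto
    have "gcomm G a b \<in> Z" if ab: "a \<in> carrier G" "b \<in> carrier G" for a b
    proof -
      have "b \<in> S" using Sall ab by simp
      then show ?thesis using ab by (simp add: Sdef)
    qed
    then have "D \<subseteq> Z" unfolding D_def using Zsub by (intro derived_sub_iff) auto
    then show False using assms(5) by (simp add: D_def Z_def)
  qed
  have strict: "S \<subset> C" using SC SneC by auto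

  define N where "N = D \<inter> Z"
  have Nsub: "subgroup N G" unfolding N_def by (rule subgroups_Inter_pair[OF Dsub Zsub])
  have grpD: "group (G\<lparr>carrier := D\<rparr>)" by (rule subgroup_imp_group[OF Dsub])
  have NsubD: "subgroup N (G\<lparr>carrier := D\<rparr>)" by (rule subgroup_incl[OF Nsub Dsub]) (auto simp: N_def)
  have NcD: "N \<subseteq> carrier (G\<lparr>carrier := D\<rparr>)" by (auto simp: N_def)
  have Nnorm: "N \<lhd> G\<lparr>carrier := D\<rparr>"
  proof (subst group.normal_inv_iff[OF grpD], intro conjI ballI NsubD)
    fix x h assume x: "x \<in> carrier (G\<lparr>carrier := D\<rparr>)" and h: "h \<in> N"
    have xD: "x \<in> D" using x by simp
    have xc: "x \<in> carrier G" using xD Dc by auto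
    have "x \<otimes> h \<otimes> inv x = h" using Zconj[of h x] h xc by (simp add: N_def)
    then show "x \<otimes>\<^bsub>G\<lparr>carrier := D\<rparr>\<^esub> h \<otimes>\<^bsub>G\<lparr>carrier := D\<rparr>\<^esub> inv\<^bsub>G\<lparr>carrier := D\<rparr>\<^esub> x \<in> N"
      using m_inv_consistent[OF Dsub xD] h by simp
  qed
  define Q where "Q = G\<lparr>carrier := D\<rparr> Mod N"
  have grpQ: "group Q" unfolding Q_def by (rule normal.factorgroup_is_group[OF Nnorm])
  have grpC: "group (G\<lparr>carrier := C\<rparr>)" by (rule subgroup_imp_group[OF Csub])
  define phi where "phi x = N #>\<^bsub>G\<lparr>carrier := D\<rparr>\<^esub> gcomm G g x" for x
  have hom: "phi \<in> hom (G\<lparr>carrier := C\<rparr>) Q"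
  proof (rule homI)
    fix x assume "x \<in> carrier (G\<lparr>carrier := C\<rparr>)"
    then have xc: "x \<in> carrier G" using Cc by auto
    have "gcomm G g x \<in> carrier (G\<lparr>carrier := D\<rparr>)" using gD g(1) xc by simp
    then show "phi x \<in> carrier Q" unfolding Q_def phi_def FactGroup_def
      using group.rcosetsI[OF grpD NcD] by simp
  next
    fix x y assume "x \<in> carrier (G\<lparr>carrier := C\<rparr>)" "y \<in> carrier (G\<lparr>carrier := C\<rparr>)"
    then have xC: "x \<in> C" and yC: "y \<in> C" by auto
    then have xc: "x \<in> carrier G" and yc: "y \<in> carrier G" using Cc by auto
    have gy: "gcomm G g y \<in> D" using gD g(1) yc by simp
    have gyc: "gcomm G g y \<in> carrier G" using g(1) yc by simp
    have "gcomm G g (x \<otimes> y) = gcomm G g x \<otimes> x \<otimes> gcomm G g y \<otimes> inv x"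
      using gcomm_mult_right[OF xc g(1) yc] .
    also have "\<dots> = gcomm G g x \<otimes> (x \<otimes> gcomm G g y \<otimes> inv x)" using xc yc g(1) by (simp add: m_assoc)
    also have "x \<otimes> gcomm G g y = gcomm G g y \<otimes> x" using CD[OF xC gy] .
    also have "gcomm G g y \<otimes> x \<otimes> inv x = gcomm G g y" using xc gyc by (simp add: m_assoc)
    finally have comm: "gcomm G g (x \<otimes> y) = gcomm G g x \<otimes> gcomm G g y" .
    have a1: "gcomm G g x \<in> carrier (G\<lparr>carrier := D\<rparr>)" using gD g(1) xc by simp
    have a2: "gcomm G g y \<in> carrier (G\<lparr>carrier := D\<rparr>)" using gy by simp
    show "phi (x \<otimes>\<^bsub>G\<lparr>carrier := C\<rparr>\<^esub> y) = phi x \<otimes>\<^bsub>Q\<^esub> phi y"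
      unfolding Q_def phi_def using normal.rcos_sum[OF Nnorm a1 a2] comm by simp
  qed
  interpret ph: group_hom "G\<lparr>carrier := C\<rparr>" Q phi
    by (rule group_hom.intro[OF grpC grpQ]) (simp add: group_hom_axioms_def hom)
  have phi1: "phi x = \<one>\<^bsub>Q\<^esub> \<longleftrightarrow> gcomm G g x \<in> N" if xc: "x \<in> carrier G" for x
  proof -
    have a: "gcomm G g x \<in> carrier (G\<lparr>carrier := D\<rparr>)" using gD g(1) xc by simp
    show ?thesis unfolding Q_def phi_def one_FactGroup
      using group.coset_join1[OF grpD _ a NsubD] group.coset_join2[OF grpD a NsubD] by blast
  qed
  have ker: "kernel (G\<lparr>carrier := C\<rparr>) Q phi = S"
  proof
    show "kernel (G\<lparr>carrier := C\<rparr>) Q phi \<subseteq> S"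
    proof
      fix x assume "x \<in> kernel (G\<lparr>carrier := C\<rparr>) Q phi"
      then have xC: "x \<in> C" and e: "phi x = \<one>\<^bsub>Q\<^esub>" by (auto simp: kernel_def)
      have xc: "x \<in> carrier G" using xC Cc by auto
      have "gcomm G g x \<in> Z" using phi1[OF xc] e by (simp add: N_def)
      then show "x \<in> S" using A[OF xc] CC[OF _ xC] by blast
    qed
  next
    show "S \<subseteq> kernel (G\<lparr>carrier := C\<rparr>) Q phi"
    proof
      fix x assume xS: "x \<in> S"
      have xC: "x \<in> C" using xS SC by auto
      have xc: "x \<in> carrier G" using xC Cc by auto
      have "gcomm G g x \<in> N" using xS g(1) gD[OF g(1) xc] by (simp add: Sdef N_def)
      then show "x \<in> kernel (G\<lparr>carrier := C\<rparr>) Q phi" using phi1[OF xc] xC by (simp add: kernel_def)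
    qed
  qed
  have n1: "S \<lhd> G\<lparr>carrier := C\<rparr>" using ph.normal_kernel ker by simp
  have h1: "(\<lambda>A. the_elem (phi ` A)) \<in> hom (G\<lparr>carrier := C\<rparr> Mod S) Q" using ph.FactGroup_hom ker by simp
  have h2: "inj_on (\<lambda>A. the_elem (phi ` A)) (carrier (G\<lparr>carrier := C\<rparr> Mod S))"
    using ph.FactGroup_inj_on ker by simp
  show ?thesis using strict n1 Nnorm h1 h2 unfolding S_def C_def D_def Z_def N_def Q_def by blast
qed

theorem lemma3p3:
  fixes G :: "('a, 'b) monoid_scheme" and p :: nat
  assumes "group G" and "finite (carrier G)"
    and "Factorial_Ring.prime p" and "p dvd order G"
    and "\<forall>q. Factorial_Ring.prime q \<and> q dvd order G \<longrightarrow> p \<le> q"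
    and "\<not> (derived G (carrier G) \<subseteq> gcenter G)"
    and "card (rcosets\<^bsub>G\<^esub> (gcentralizer G (derived G (carrier G)))) = p"
    and "card (derived G (carrier G) \<inter> gcenter G) = p"
  shows "gstar G (gcenter G) \<subset> gcentralizer G (derived G (carrier G))
    \<and> gstar G (gcenter G) \<lhd> (G\<lparr>carrier := gcentralizer G (derived G (carrier G))\<rparr>)
    \<and> (derived G (carrier G) \<inter> gcenter G) \<lhd> (G\<lparr>carrier := derived G (carrier G)\<rparr>)
    \<and> (\<exists>h. h \<in> hom ((G\<lparr>carrier := gcentralizer G (derived G (carrier G))\<rparr>) Mod gstar G (gcenter G))
                    ((G\<lparr>carrier := derived G (carrier G)\<rparr>) Mod (derived G (carrier G) \<inter> gcenter G))
           \<and> inj_on h (carrier ((G\<lparr>carrier := gcentralizer G (derived G (carrier G))\<rparr>) Mod gstar G (gcenter G))))"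
  by (rule group.main_aux[OF assms])

end
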